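(* Consider the DRV process with choice function $k(n)$ satisfying $k(n)\to\infty$ and $k(n)\ge\log_2 n$. Then there is a constant $C$ such that for all $n$ and every time $t\le n$, the expected number of red edges plus the expected number of green edges among the first $t$ edges added is at most $C\,\frac{n}{k(n)}$.
   Context: The DRV process (Degree Rule with Varying Choice): fix a function $k=k(n)$ with $2\le k(n)\le n$. Start at time $t=0$ with $n$ isolated vertices and no edges. At each time step $t=0,1,2,\dots$ (one edge is added per step, so after $t$ steps the graph has $t$ edges; multiple edges are allowed), independently of the past choose a set $V_t$ of $k(n)$ distinct vertices uniformly at random, and let $V_{t,d}$ be the set of vertices in $V_t$ whose current degree is $d$. If $|V_{t,0}|\ge 2$, add an edge between two vertices of $V_{t,0}$ sampled uniformly at random without replacement; otherwise, if $|V_{t,1}|\ge 2$, add an edge between two vertices of $V_{t,1}$ sampled uniformly at random without replacement; otherwise add an edge between two vertices of $V_t$ sampled uniformly at random without replacement. Edge types and colors: an edge is an $(i,j)$ edge if, at the moment it was added, its two endpoints had degrees $i$ and $j$. Each added edge is colored as follows: a $(0,0)$ edge added at a time $t\le n/2$ is blue; a $(1,1)$ edge added at a time $t\ge n/2$ is blue; a $(0,1)$ or $(1,1)$ edge added at a time $t< n/2$ is green; every other edge (i.e. $(0,0)$ or $(0,1)$ edges added after time $n/2$, and any $(i,j)$ edge with $i\ge2$ or $j\ge 2$ at any time) is red. *)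

theory Defs
  imports "HOL-Probability.Probability"
begin

text \<open>The graph after t steps is recorded as a list
of the t edges added so far, in order of addition (the edge at list position s was added
at time s). Each entry is ((a,b),(i,j)): the endpoints a, b (a \<noteq> b) and the degrees
i, j of a and b at the moment the edge was added. Multiple edges are allowed.\<close>

type_synonym drv_edge = "(nat \<times> nat) \<times> (nat \<times> nat)"
type_synonym drv_graph = "drv_edge list"

definition drv_deg :: "drv_graph \<Rightarrow> nat \<Rightarrow> nat" where
  "drv_deg G v = length (filter (\<lambda>e. fst (fst e) = v) G) + length (filter (\<lambda>e. snd (fst e) = v) G)"

definition drv_add_edge :: "drv_graph \<Rightarrow> nat \<Rightarrow> nat \<Rightarrow> drv_graph" where
  "drv_add_edge G a b = G @ [((a, b), (drv_deg G a, drv_deg G b))]"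

definition drv_pool :: "drv_graph \<Rightarrow> nat set \<Rightarrow> nat set" where
  "drv_pool G V =
     (if card {v \<in> V. drv_deg G v = 0} \<ge> 2 then {v \<in> V. drv_deg G v = 0}
      else if card {v \<in> V. drv_deg G v = 1} \<ge> 2 then {v \<in> V. drv_deg G v = 1}
      else V)"

definition drv_step :: "nat \<Rightarrow> nat \<Rightarrow> drv_graph \<Rightarrow> drv_graph pmf" where
  "drv_step n k G =
     do { V \<leftarrow> pmf_of_set {V. V \<subseteq> {..<n} \<and> card V = k};
          let A = drv_pool G V;
          (a, b) \<leftarrow> pmf_of_set {(a, b). a \<in> A \<and> b \<in> A \<and> a \<noteq> b};
          return_pmf (drv_add_edge G a b) }"

primrec drv :: "nat \<Rightarrow> nat \<Rightarrow> nat \<Rightarrow> drv_graph pmf" where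
  "drv n k 0 = return_pmf []"
| "drv n k (Suc t) = bind_pmf (drv n k t) (drv_step n k)"

datatype edge_color = Blue | Green | Red

definition edge_color :: "nat \<Rightarrow> nat \<Rightarrow> nat \<times> nat \<Rightarrow> edge_color" where
  "edge_color n s ij =
     (if ij = (0, 0) \<and> real s \<le> real n / 2 then Blue
      else if ij = (1, 1) \<and> real s \<ge> real n / 2 then Blue
      else if (ij = (0, 1) \<or> ij = (1, 0) \<or> ij = (1, 1)) \<and> real s < real n / 2 then Green
      else Red)"

definition num_color :: "nat \<Rightarrow> edge_color \<Rightarrow> nat \<Rightarrow> drv_graph \<Rightarrow> nat" where
  "num_color n c t G = card {s. s < t \<and> s < length G \<and> edge_color n s (snd (G ! s)) = c}"

end

theory Submission
  imports Defs
begin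

lemma deg_add: "drv_deg (drv_add_edge G a b) v = drv_deg G v + (if v = a then 1 else 0) + (if v = b then 1 else 0)"
  by (simp add: drv_deg_def drv_add_edge_def)

lemma deg_Nil[simp]: "drv_deg [] v = 0" by (simp add: drv_deg_def)

lemma deg_Cons: "drv_deg (e # G) v = drv_deg G v + (if fst (fst e) = v then 1 else 0) + (if snd (fst e) = v then 1 else 0)"
  by (simp add: drv_deg_def)

lemma sum_ind_le: "finite S \<Longrightarrow> (\<Sum>v\<in>S. (if x = v then 1 else 0::nat)) \<le> 1"
  by (cases "x \<in> S") (simp_all add: sum.delta)

lemma degsum: "finite S \<Longrightarrow> (\<Sum>v\<in>S. drv_deg G v) \<le> 2 * length G"
proof (induction G)
  case Nil then show ?case by simp
next
  case (Cons e G)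
  have "(\<Sum>v\<in>S. drv_deg (e#G) v) = (\<Sum>v\<in>S. drv_deg G v) + (\<Sum>v\<in>S. (if fst (fst e) = v then 1 else 0)) + (\<Sum>v\<in>S. (if snd (fst e) = v then 1 else 0))"
    by (simp add: deg_Cons sum.distrib)
  also have "\<dots> \<le> 2 * length G + 1 + 1"
    using Cons sum_ind_le[of S "fst (fst e)"] sum_ind_le[of S "snd (fst e)"] by linarith
  finally show ?case by simp
qed

definition Zs :: "nat \<Rightarrow> drv_graph \<Rightarrow> nat set" where
  "Zs n G = {v \<in> {..<n}. drv_deg G v = 0}"
definition Ls :: "nat \<Rightarrow> drv_graph \<Rightarrow> nat set" where
  "Ls n G = {v \<in> {..<n}. drv_deg G v \<le> 1}"

lemma card_Zs: "n \<le> card (Zs n G) + 2 * length G"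
proof -
  let ?N = "{v \<in> {..<n}. drv_deg G v \<noteq> 0}"
  have "card ?N = (\<Sum>v\<in>?N. 1)" by simp
  also have "\<dots> \<le> (\<Sum>v\<in>?N. drv_deg G v)" by (intro sum_mono) auto
  also have "\<dots> \<le> 2 * length G" by (rule degsum) simp
  finally have 1: "card ?N \<le> 2 * length G" .
  have "card (Zs n G) + card ?N = card (Zs n G \<union> ?N)"
    by (subst card_Un_disjoint) (auto simp: Zs_def)
  also have "Zs n G \<union> ?N = {..<n}" by (auto simp: Zs_def)
  finally show ?thesis using 1 by simp
qed

lemma card_Ls: "n \<le> card (Ls n G) + length G"
proof -
  let ?N = "{v \<in> {..<n}. \<not> drv_deg G v \<le> 1}"
  have "2 * card ?N = (\<Sum>v\<in>?N. 2)" by simp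
  also have "\<dots> \<le> (\<Sum>v\<in>?N. drv_deg G v)" by (intro sum_mono) auto
  also have "\<dots> \<le> 2 * length G" by (rule degsum) simp
  finally have 1: "card ?N \<le> length G" by simp
  have "card (Ls n G) + card ?N = card (Ls n G \<union> ?N)"
    by (subst card_Un_disjoint) (auto simp: Ls_def)
  also have "Ls n G \<union> ?N = {..<n}" by (auto simp: Ls_def)
  finally show ?thesis using 1 by simp
qed

definition cnt :: "nat \<Rightarrow> drv_graph \<Rightarrow> nat" where
  "cnt n G = card {s. s < length G \<and> edge_color n s (snd (G ! s)) \<noteq> Blue}"

lemma cnt_add: "cnt n (drv_add_edge G a b) = cnt n G +
   (if edge_color n (length G) (drv_deg G a, drv_deg G b) \<noteq> Blue then 1 else 0)"
proof -
  let ?S = "{s. s < length G \<and> edge_color n s (snd (G ! s)) \<noteq> Blue}"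
  have eq: "{s. s < length (drv_add_edge G a b) \<and> edge_color n s (snd (drv_add_edge G a b ! s)) \<noteq> Blue}
     = ?S \<union> (if edge_color n (length G) (drv_deg G a, drv_deg G b) \<noteq> Blue then {length G} else {})"
    by (auto simp: drv_add_edge_def nth_append less_Suc_eq)
  have fin: "finite ?S" by simp
  show ?thesis unfolding cnt_def eq using fin by (auto simp: card_insert_if)
qed

lemma num_cnt:
  assumes "length G = t"
  shows "real (num_color n Red t G) + real (num_color n Green t G) = real (cnt n G)"
proof -
  have "card {s. s < t \<and> s < length G \<and> edge_color n s (snd (G ! s)) = Red} + card {s. s < t \<and> s < length G \<and> edge_color n s (snd (G ! s)) = Green}
    = card ({s. s < t \<and> s < length G \<and> edge_color n s (snd (G ! s)) = Red} \<union> {s. s < t \<and> s < length G \<and> edge_color n s (snd (G ! s)) = Green})"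
    by (subst card_Un_disjoint) auto
  also have "{s. s < t \<and> s < length G \<and> edge_color n s (snd (G ! s)) = Red} \<union> {s. s < t \<and> s < length G \<and> edge_color n s (snd (G ! s)) = Green}
     = {s. s < length G \<and> edge_color n s (snd (G ! s)) \<noteq> Blue}"
    using assms by (auto intro: edge_color.exhaust)
  finally show ?thesis by (simp add: num_color_def cnt_def flip: of_nat_add)
qed


definition Phi :: "nat \<Rightarrow> drv_graph \<Rightarrow> real" where
  "Phi n G = real (cnt n G) + real (card (Zs n G))"

definition delta :: "nat \<Rightarrow> drv_graph \<Rightarrow> nat set \<Rightarrow> real" where
  "delta n G V = (if 2 * length G < n then (if 2 \<le> card {v\<in>V. drv_deg G v = 0} then -2 else 1)
     else (if card {v\<in>V. drv_deg G v = 0} + card {v\<in>V. drv_deg G v = 1} \<le> 2 then 1 else 0))"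

lemma Zs_add: "Zs n (drv_add_edge G a b) = Zs n G - {a, b}"
  by (auto simp: Zs_def deg_add)

lemma step_pt:
  assumes V: "V \<subseteq> {..<n}" and ab: "a \<in> drv_pool G V" "b \<in> drv_pool G V" "a \<noteq> b"
  shows "Phi n (drv_add_edge G a b) \<le> Phi n G + delta n G V"
proof -
  let ?D0 = "{v\<in>V. drv_deg G v = 0}" and ?D1 = "{v\<in>V. drv_deg G v = 1}"
  have finZ: "finite (Zs n G)" by (simp add: Zs_def)
  have Zle: "card (Zs n (drv_add_edge G a b)) \<le> card (Zs n G)"
    unfolding Zs_add using finZ by (intro card_mono) auto
  have cle: "cnt n (drv_add_edge G a b) \<le> cnt n G + 1" by (simp add: cnt_add)
  show ?thesis
  proof (cases "2 \<le> card ?D0")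
    case True
    then have pool: "drv_pool G V = ?D0" by (simp add: drv_pool_def)
    have a0: "drv_deg G a = 0" "drv_deg G b = 0" "a \<in> V" "b \<in> V" using ab pool by auto
    have sub: "{a, b} \<subseteq> Zs n G" using a0 V by (auto simp: Zs_def)
    have Zeq: "card (Zs n (drv_add_edge G a b)) = card (Zs n G) - 2"
      unfolding Zs_add using finZ sub ab(3) by (subst card_Diff_subset) auto
    have Zge: "card (Zs n G) \<ge> 2" using card_mono[OF finZ sub] ab(3) by simp
    show ?thesis
    proof (cases "2 * length G < n")
      case True
      have "edge_color n (length G) (0, 0) = Blue" using True by (simp add: edge_color_def)
      then have "cnt n (drv_add_edge G a b) = cnt n G" by (simp add: cnt_add a0)
      then show ?thesis using True \<open>2 \<le> card ?D0\<close> Zeq Zge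
        by (simp add: Phi_def delta_def of_nat_diff)
    next
      case False
      have "delta n G V \<ge> 0" using False by (simp add: delta_def)
      then show ?thesis using cle Zeq Zge by (simp add: Phi_def of_nat_diff)
    qed
  next
    case F0: False
    show ?thesis
    proof (cases "2 * length G < n")
      case True
      then show ?thesis using F0 cle Zle by (simp add: Phi_def delta_def)
    next
      case F1: False
      show ?thesis
      proof (cases "2 \<le> card ?D1")
        case True
        then have pool: "drv_pool G V = ?D1" using F0 by (simp add: drv_pool_def)
        have a1: "drv_deg G a = 1" "drv_deg G b = 1" using ab pool by auto
        have "edge_color n (length G) (1, 1) = Blue" using F1 by (simp add: edge_color_def)
        then have "cnt n (drv_add_edge G a b) = cnt n G" by (simp add: cnt_add a1)
        moreover have "delta n G V \<ge> 0" using F1 by (simp add: delta_def)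
        ultimately show ?thesis using Zle by (simp add: Phi_def)
      next
        case False
        then have "delta n G V = 1" using F0 F1 by (simp add: delta_def)
        then show ?thesis using cle Zle by (simp add: Phi_def)
      qed
    qed
  qed
qed


lemma choose_conv: "(\<Sum>m\<le>n. (m choose j) * ((n - m) choose r)) = Suc n choose (j + r + 1)"
proof (induction n arbitrary: r)
  case 0 then show ?case by (cases j; cases r) auto
next
  case (Suc n)
  show ?case
  proof (cases r)
    case 0
    then show ?thesis using sum_choose_upper[of j "Suc n"] by simp
  next
    case (Suc r')
    have "(\<Sum>m\<le>Suc n. (m choose j) * ((Suc n - m) choose r))
        = (\<Sum>m\<le>n. (m choose j) * ((Suc n - m) choose r)) + (Suc n choose j) * (0 choose r)"
      by simp
    also have "(0 choose r) = 0" using Suc by simp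
    also have "(\<Sum>m\<le>n. (m choose j) * ((Suc n - m) choose r))
        = (\<Sum>m\<le>n. (m choose j) * ((n - m) choose r') + (m choose j) * ((n - m) choose r))"
      by (intro sum.cong refl) (simp add: Suc Suc_diff_le algebra_simps)
    also have "\<dots> = (Suc n choose (j + r' + 1)) + (Suc n choose (j + r + 1))"
      by (simp add: sum.distrib Suc.IH)
    also have "\<dots> = Suc (Suc n) choose (j + r + 1)" using Suc by simp
    finally show ?thesis by simp
  qed
qed

definition H :: "nat \<Rightarrow> nat \<Rightarrow> nat \<Rightarrow> nat" where
  "H n k m = (\<Sum>j\<le>2. (m choose j) * ((n - m) choose (k - j)))"

lemma sum_H: assumes "2 \<le> k" shows "(\<Sum>m\<le>n. H n k m) = 3 * (Suc n choose Suc k)"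
proof -
  have "(\<Sum>m\<le>n. H n k m) = (\<Sum>j\<le>2. \<Sum>m\<le>n. (m choose j) * ((n - m) choose (k - j)))"
    unfolding H_def by (rule sum.swap)
  also have "\<dots> = (\<Sum>j\<le>(2::nat). Suc n choose Suc k)"
    using assms by (intro sum.cong refl) (simp add: choose_conv)
  finally show ?thesis by simp
qed

lemma card_Sj:
  assumes A0: "A0 \<subseteq> {..<n}" "card A0 = m"
  shows "card {V. V \<subseteq> {..<n} \<and> card V = k \<and> card (V \<inter> A0) = j} \<le> (m choose j) * ((n - m) choose (k - j))"
proof -
  let ?T = "{B. B \<subseteq> A0 \<and> card B = j} \<times> {D. D \<subseteq> {..<n} - A0 \<and> card D = k - j}"
  have finA0: "finite A0" using A0 finite_subset by blast
  have "card {V. V \<subseteq> {..<n} \<and> card V = k \<and> card (V \<inter> A0) = j} \<le> card ?T"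
  proof (rule card_inj_on_le[where f = "\<lambda>V. (V \<inter> A0, V - A0)"])
    show "inj_on (\<lambda>V. (V \<inter> A0, V - A0)) {V. V \<subseteq> {..<n} \<and> card V = k \<and> card (V \<inter> A0) = j}"
      by (rule inj_onI) (metis Int_Diff_Un prod.inject)
    show "(\<lambda>V. (V \<inter> A0, V - A0)) ` {V. V \<subseteq> {..<n} \<and> card V = k \<and> card (V \<inter> A0) = j} \<subseteq> ?T"
    proof (rule image_subsetI)
      fix V assume "V \<in> {V. V \<subseteq> {..<n} \<and> card V = k \<and> card (V \<inter> A0) = j}"
      then have V: "V \<subseteq> {..<n}" "card (V \<inter> A0) = j" "card V = k" by auto
      have "finite V" using V finite_subset by blast
      then have "card (V - A0) = k - j" using V by (simp add: card_Diff_subset_Int)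
      then show "(V \<inter> A0, V - A0) \<in> ?T" using V by auto
    qed
    show "finite ?T" using finA0 by auto
  qed
  also have "card ?T = (m choose j) * ((n - m) choose (k - j))"
    using A0 finA0 by (simp add: card_cartesian_product n_subsets card_Diff_subset)
  finally show ?thesis .
qed

lemma count_le:
  assumes A: "A \<subseteq> {..<n}" "m \<le> card A"
  shows "card {V. V \<subseteq> {..<n} \<and> card V = k \<and> card (V \<inter> A) \<le> 2} \<le> H n k m"
proof -
  have finA: "finite A" using A finite_subset by blast
  obtain A0 where A0: "A0 \<subseteq> A" "card A0 = m" using obtain_subset_with_card_n[OF A(2)] by blast
  have A0n: "A0 \<subseteq> {..<n}" using A0 A by auto
  have "{V. V \<subseteq> {..<n} \<and> card V = k \<and> card (V \<inter> A) \<le> 2}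
     \<subseteq> (\<Union>j\<le>2. {V. V \<subseteq> {..<n} \<and> card V = k \<and> card (V \<inter> A0) = j})"
  proof (rule subsetI)
    fix V assume "V \<in> {V. V \<subseteq> {..<n} \<and> card V = k \<and> card (V \<inter> A) \<le> 2}"
    then have V: "V \<subseteq> {..<n}" "card V = k" "card (V \<inter> A) \<le> 2" by auto
    moreover have "card (V \<inter> A0) \<le> card (V \<inter> A)" using finA A0 by (intro card_mono) auto
    ultimately show "V \<in> (\<Union>j\<le>2. {V. V \<subseteq> {..<n} \<and> card V = k \<and> card (V \<inter> A0) = j})" by auto
  qed
  then have "card {V. V \<subseteq> {..<n} \<and> card V = k \<and> card (V \<inter> A) \<le> 2}
     \<le> card (\<Union>j\<le>2. {V. V \<subseteq> {..<n} \<and> card V = k \<and> card (V \<inter> A0) = j})"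
    by (intro card_mono) auto
  also have "\<dots> \<le> (\<Sum>j\<le>2. card {V. V \<subseteq> {..<n} \<and> card V = k \<and> card (V \<inter> A0) = j})"
    by (rule card_UN_le) simp
  also have "\<dots> \<le> H n k m" unfolding H_def
    by (intro sum_mono card_Sj A0n A0)
  finally show ?thesis .
qed


definition Fs :: "nat \<Rightarrow> nat \<Rightarrow> nat set set" where
  "Fs n k = {V. V \<subseteq> {..<n} \<and> card V = k}"
definition Pairs :: "nat set \<Rightarrow> (nat \<times> nat) set" where
  "Pairs A = {(a, b). a \<in> A \<and> b \<in> A \<and> a \<noteq> b}"

lemma step_eq: "drv_step n k G = pmf_of_set (Fs n k) \<bind>
   (\<lambda>V. pmf_of_set (Pairs (drv_pool G V)) \<bind> (\<lambda>p. return_pmf (drv_add_edge G (fst p) (snd p))))"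
  unfolding drv_step_def Let_def Fs_def Pairs_def split_def ..

lemma Fs_props: assumes "k \<le> n"
  shows "finite (Fs n k)" "Fs n k \<noteq> {}" "card (Fs n k) = n choose k"
proof -
  show "finite (Fs n k)" unfolding Fs_def by (rule finite_subset[of _ "Pow {..<n}"]) auto
  show "card (Fs n k) = n choose k" unfolding Fs_def using n_subsets[of "{..<n}" k] by simp
  then show "Fs n k \<noteq> {}" using assms \<open>finite (Fs n k)\<close>
    by (metis card.empty zero_less_binomial less_irrefl)
qed

lemma pool_sub: "drv_pool G V \<subseteq> V" by (auto simp: drv_pool_def)

lemma pool_card: assumes "V \<in> Fs n k" "2 \<le> k" shows "2 \<le> card (drv_pool G V)"
  using assms by (auto simp: drv_pool_def Fs_def)

lemma Pairs_props: assumes "V \<in> Fs n k" "2 \<le> k"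
  shows "finite (Pairs (drv_pool G V))" "Pairs (drv_pool G V) \<noteq> {}"
proof -
  have finV: "finite V" using assms(1) unfolding Fs_def using finite_subset by blast
  then have finP: "finite (drv_pool G V)" using pool_sub finite_subset by blast
  show "finite (Pairs (drv_pool G V))"
    by (rule finite_subset[of _ "drv_pool G V \<times> drv_pool G V"]) (auto simp: Pairs_def finP)
  have "2 \<le> card (drv_pool G V)" by (rule pool_card[OF assms])
  then obtain a b where "a \<in> drv_pool G V" "b \<in> drv_pool G V" "a \<noteq> b"
    by (metis card_2_iff' obtain_subset_with_card_n subset_iff numeral_2_eq_2 card_le_Suc_iff Suc_le_D)
  then show "Pairs (drv_pool G V) \<noteq> {}" by (auto simp: Pairs_def)
qed

lemma set_step: assumes "2 \<le> k" "k \<le> n"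
  shows "set_pmf (drv_step n k G) = (\<Union>V\<in>Fs n k. (\<lambda>p. drv_add_edge G (fst p) (snd p)) ` Pairs (drv_pool G V))"
  unfolding step_eq using Fs_props[OF assms(2)] Pairs_props[OF _ assms(1)] by auto

lemma drv_supp: assumes "2 \<le> k" "k \<le> n"
  shows "finite (set_pmf (drv n k t)) \<and> (\<forall>G\<in>set_pmf (drv n k t). length G = t)"
proof (induction t)
  case 0 then show ?case by simp
next
  case (Suc t)
  have fs: "finite (set_pmf (drv_step n k G))" for G
    unfolding set_step[OF assms] using Fs_props[OF assms(2)] Pairs_props[OF _ assms(1)] by auto
  have ls: "G' \<in> set_pmf (drv_step n k G) \<Longrightarrow> length G' = Suc (length G)" for G G'
    unfolding set_step[OF assms] by (auto simp: drv_add_edge_def)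
  show ?case using Suc fs ls by auto
qed


definition Bq :: "nat \<Rightarrow> nat \<Rightarrow> nat \<Rightarrow> real" where
  "Bq n k m = real (H n k m) / real (n choose k)"

definition gam :: "nat \<Rightarrow> nat \<Rightarrow> nat \<Rightarrow> real" where
  "gam n k t = (if 2 * t < n then 3 * Bq n k (n - 2 * t) else Bq n k (n - t))"

lemma sum_ind: "finite S \<Longrightarrow> (\<Sum>V\<in>S. (if P V then 1 else 0::real)) = real (card {V\<in>S. P V})"
  by (simp add: sum.inter_filter[symmetric])

lemma delta_avg:
  assumes k: "2 \<le> k" "k \<le> n"
  shows "(\<Sum>V\<in>Fs n k. delta n G V) / real (card (Fs n k))
      \<le> gam n k (length G) - (if 2 * length G < n then 2 else 0)"
proof -
  have cF: "real (card (Fs n k)) = real (n choose k)" using Fs_props[OF k(2)] by simp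
  have cpos: "real (n choose k) > 0" using k by simp
  have D0: "{v\<in>V. drv_deg G v = 0} = V \<inter> Zs n G" if "V \<in> Fs n k" for V
    using that by (auto simp: Fs_def Zs_def)
  have D01: "card {v\<in>V. drv_deg G v = 0} + card {v\<in>V. drv_deg G v = 1} = card (V \<inter> Ls n G)"
    if "V \<in> Fs n k" for V
  proof -
    have fV: "finite V" using that unfolding Fs_def using finite_subset by blast
    have "V \<inter> Ls n G = {v\<in>V. drv_deg G v = 0} \<union> {v\<in>V. drv_deg G v = 1}"
      using that by (auto simp: Fs_def Ls_def)
    then show ?thesis using fV by (simp add: card_Un_disjoint) (subst card_Un_disjoint; auto)
  qed
  show ?thesis
  proof (cases "2 * length G < n")
    case True
    have "(\<Sum>V\<in>Fs n k. delta n G V) \<le> (\<Sum>V\<in>Fs n k. -2 + 3 * (if card (V \<inter> Zs n G) \<le> 2 then 1 else 0))"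
      by (intro sum_mono) (auto simp: delta_def True D0)
    also have "\<dots> = -2 * real (card (Fs n k)) + 3 * real (card {V\<in>Fs n k. card (V \<inter> Zs n G) \<le> 2})"
    proof -
      have "(\<Sum>V\<in>Fs n k. -2 + 3 * (if card (V \<inter> Zs n G) \<le> 2 then 1 else (0::real)))
         = (\<Sum>V\<in>Fs n k. -2) + 3 * (\<Sum>V\<in>Fs n k. (if card (V \<inter> Zs n G) \<le> 2 then 1 else (0::real)))"
        by (simp add: sum_subtractf sum_distrib_left)
      then show ?thesis using sum_ind[OF Fs_props(1)[OF k(2)]] by simp
    qed
    also have "card {V\<in>Fs n k. card (V \<inter> Zs n G) \<le> 2} \<le> H n k (n - 2 * length G)"
      unfolding Fs_def using card_Zs[of n G]
      by (simp add: Collect_conj_eq[symmetric] conj_assoc) (rule count_le, auto simp: Zs_def)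
    finally have "(\<Sum>V\<in>Fs n k. delta n G V) \<le> -2 * real (card (Fs n k)) + 3 * real (H n k (n - 2 * length G))"
      by simp
    then show ?thesis using True cF cpos
      by (simp add: gam_def Bq_def divide_simps)
  next
    case False
    have "(\<Sum>V\<in>Fs n k. delta n G V) \<le> (\<Sum>V\<in>Fs n k. (if card (V \<inter> Ls n G) \<le> 2 then 1 else 0))"
    proof (rule sum_mono)
      fix V assume V: "V \<in> Fs n k"
      show "delta n G V \<le> (if card (V \<inter> Ls n G) \<le> 2 then 1 else 0)"
        unfolding delta_def using False D01[OF V] by simp
    qed
    also have "\<dots> = real (card {V\<in>Fs n k. card (V \<inter> Ls n G) \<le> 2})"
      by (simp add: sum_ind[OF Fs_props(1)[OF k(2)]])
    also have "card {V\<in>Fs n k. card (V \<inter> Ls n G) \<le> 2} \<le> H n k (n - length G)"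
      unfolding Fs_def using card_Ls[of n G]
      by (simp add: Collect_conj_eq[symmetric] conj_assoc) (rule count_le, auto simp: Ls_def)
    finally show ?thesis using False cF cpos
      by (simp add: gam_def Bq_def divide_simps)
  qed
qed


lemma inner_exp:
  assumes k: "2 \<le> k" "k \<le> n" and V: "V \<in> Fs n k"
  shows "measure_pmf.expectation (pmf_of_set (Pairs (drv_pool G V)) \<bind> (\<lambda>p. return_pmf (drv_add_edge G (fst p) (snd p)))) (Phi n)
     \<le> Phi n G + delta n G V"
proof -
  note P = Pairs_props[OF V k(1), of G]
  have cpos: "real (card (Pairs (drv_pool G V))) > 0" using P by (simp add: card_gt_0_iff)
  have "measure_pmf.expectation (pmf_of_set (Pairs (drv_pool G V)) \<bind> (\<lambda>p. return_pmf (drv_add_edge G (fst p) (snd p)))) (Phi n)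
     = (\<Sum>p\<in>Pairs (drv_pool G V). Phi n (drv_add_edge G (fst p) (snd p)) / real (card (Pairs (drv_pool G V))))"
    using P by (subst pmf_expectation_bind_pmf_of_set) (auto simp: divide_inverse_commute)
  also have "\<dots> \<le> (\<Sum>p\<in>Pairs (drv_pool G V). (Phi n G + delta n G V) / real (card (Pairs (drv_pool G V))))"
  proof (rule sum_mono)
    fix p assume "p \<in> Pairs (drv_pool G V)"
    then have "Phi n (drv_add_edge G (fst p) (snd p)) \<le> Phi n G + delta n G V"
      using V by (intro step_pt) (auto simp: Pairs_def Fs_def)
    then show "Phi n (drv_add_edge G (fst p) (snd p)) / real (card (Pairs (drv_pool G V)))
       \<le> (Phi n G + delta n G V) / real (card (Pairs (drv_pool G V)))"
      using cpos by (simp add: divide_right_mono)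
  qed
  also have "\<dots> = Phi n G + delta n G V" using cpos by simp
  finally show ?thesis .
qed

lemma exp_step:
  assumes k: "2 \<le> k" "k \<le> n"
  shows "measure_pmf.expectation (drv_step n k G) (Phi n)
     \<le> Phi n G + gam n k (length G) - (if 2 * length G < n then 2 else 0)"
proof -
  note FP = Fs_props[OF k(2)]
  have cpos: "real (card (Fs n k)) > 0" using FP k by (simp add: card_gt_0_iff)
  have fin: "finite (set_pmf (pmf_of_set (Pairs (drv_pool G V)) \<bind> (\<lambda>p. return_pmf (drv_add_edge G (fst p) (snd p)))))"
    if "V \<in> Fs n k" for V using Pairs_props[OF that k(1), of G] by simp
  have "measure_pmf.expectation (drv_step n k G) (Phi n)
     = (\<Sum>V\<in>Fs n k. measure_pmf.expectation (pmf_of_set (Pairs (drv_pool G V)) \<bind> (\<lambda>p. return_pmf (drv_add_edge G (fst p) (snd p)))) (Phi n) / real (card (Fs n k)))"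
    unfolding step_eq using FP fin by (subst pmf_expectation_bind_pmf_of_set) (auto simp: divide_inverse_commute)
  also have "\<dots> \<le> (\<Sum>V\<in>Fs n k. (Phi n G + delta n G V) / real (card (Fs n k)))"
    using cpos inner_exp[OF k] by (intro sum_mono divide_right_mono) auto
  also have "\<dots> = Phi n G + (\<Sum>V\<in>Fs n k. delta n G V) / real (card (Fs n k))"
    using cpos by (simp add: sum.distrib add_divide_distrib sum_divide_distrib[symmetric])
  also have "\<dots> \<le> Phi n G + gam n k (length G) - (if 2 * length G < n then 2 else 0)"
    using delta_avg[OF k, of G] by simp
  finally show ?thesis .
qed

lemma exp_sum: "finite (set_pmf p) \<Longrightarrow> measure_pmf.expectation p f = (\<Sum>G\<in>set_pmf p. pmf p G * f G)"
  by (subst integral_measure_pmf[of "set_pmf p"]) auto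

lemma main_inv:
  assumes k: "2 \<le> k" "k \<le> n"
  shows "measure_pmf.expectation (drv n k t) (Phi n) \<le> max (real n - 2 * real t) 0 + (\<Sum>s<t. gam n k s)"
proof (induction t)
  case 0
  have "Phi n [] = real n" by (simp add: Phi_def cnt_def Zs_def)
  then show ?case by simp
next
  case (Suc t)
  note S = drv_supp[OF k, of t]
  let ?p = "drv n k t"
  have fin: "finite (set_pmf (drv_step n k G))" for G
    unfolding set_step[OF k] using Fs_props[OF k(2)] Pairs_props[OF _ k(1)] by auto
  have "measure_pmf.expectation (drv n k (Suc t)) (Phi n)
      = (\<Sum>G\<in>set_pmf ?p. pmf ?p G * measure_pmf.expectation (drv_step n k G) (Phi n))"
    using S fin by (simp add: pmf_expectation_bind[of "set_pmf ?p"])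
  also have "\<dots> \<le> (\<Sum>G\<in>set_pmf ?p. pmf ?p G * (Phi n G + (gam n k t - (if 2 * t < n then 2 else 0))))"
  proof (rule sum_mono)
    fix G assume G: "G \<in> set_pmf ?p"
    then have "length G = t" using S by auto
    then have "measure_pmf.expectation (drv_step n k G) (Phi n) \<le> Phi n G + (gam n k t - (if 2 * t < n then 2 else 0))"
      using exp_step[OF k, of G] by simp
    then show "pmf ?p G * measure_pmf.expectation (drv_step n k G) (Phi n) \<le> pmf ?p G * (Phi n G + (gam n k t - (if 2 * t < n then 2 else 0)))"
      by (intro mult_left_mono) (auto simp: pmf_nonneg)
  qed
  also have "\<dots> = (\<Sum>G\<in>set_pmf ?p. pmf ?p G * Phi n G) + (gam n k t - (if 2 * t < n then 2 else 0))"
    using S sum_pmf_eq_1[of "set_pmf ?p" ?p]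
    by (simp add: distrib_left sum.distrib sum_distrib_right[symmetric])
  also have "(\<Sum>G\<in>set_pmf ?p. pmf ?p G * Phi n G) = measure_pmf.expectation ?p (Phi n)"
    using S by (simp add: exp_sum)
  also have "measure_pmf.expectation ?p (Phi n) + (gam n k t - (if 2 * t < n then 2 else 0))
     \<le> max (real n - 2 * real t) 0 + (\<Sum>s<t. gam n k s) + (gam n k t - (if 2 * t < n then 2 else 0))"
    using Suc.IH by simp
  also have "\<dots> \<le> max (real n - 2 * real (Suc t)) 0 + (\<Sum>s<Suc t. gam n k s)"
    by (cases "2 * t < n") auto
  finally show ?case .
qed


lemma reidx:
  fixes g :: "nat \<Rightarrow> real"
  assumes "inj_on h S" "h ` S \<subseteq> {..n}" "\<And>m. g m \<ge> 0"
  shows "(\<Sum>s\<in>S. g (h s)) \<le> (\<Sum>m\<le>n. g m)"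
proof -
  have "(\<Sum>s\<in>S. g (h s)) = (\<Sum>m\<in>h ` S. g m)" using sum.reindex[OF assms(1), of g] by simp
  also have "\<dots> \<le> (\<Sum>m\<le>n. g m)" using assms by (intro sum_mono2) auto
  finally show ?thesis .
qed

lemma Bq_nonneg: "Bq n k m \<ge> 0" by (simp add: Bq_def)

lemma sum_Bq: assumes "2 \<le> k" "k \<le> n"
  shows "(\<Sum>m\<le>n. Bq n k m) = 3 * (real n + 1) / (real k + 1)"
proof -
  have "(\<Sum>m\<le>n. Bq n k m) = real (\<Sum>m\<le>n. H n k m) / real (n choose k)"
    by (simp add: Bq_def sum_divide_distrib)
  also have "\<dots> = 3 * real (Suc n choose Suc k) / real (n choose k)"
    using sum_H[OF assms(1)] by simp
  also have "real (Suc n choose Suc k) = (real n + 1) * real (n choose k) / (real k + 1)"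
  proof -
    have h: "(real k + 1) * real (Suc n choose Suc k) = (real n + 1) * real (n choose k)"
      by (metis Suc_times_binomial of_nat_Suc of_nat_mult add.commute)
    show ?thesis by (subst h[symmetric]) (simp del: binomial_Suc_Suc)
  qed
  also have "3 * ((real n + 1) * real (n choose k) / (real k + 1)) / real (n choose k) = 3 * (real n + 1) / (real k + 1)"
  proof -
    have cp: "real (n choose k) \<noteq> 0" using assms by simp
    have kp: "real k + 1 \<noteq> 0" by simp
    show ?thesis using cp kp by (simp add: divide_simps)
  qed
  finally show ?thesis .
qed

lemma sum_gam: assumes "2 \<le> k" "k \<le> n" "t \<le> n"
  shows "(\<Sum>s<t. gam n k s) \<le> 12 * real n / real k"
proof -
  have "(\<Sum>s<t. gam n k s) = 3 * (\<Sum>s<t. if 2 * s < n then Bq n k (n - 2 * s) else 0) + (\<Sum>s<t. if 2 * s < n then 0 else Bq n k (n - s))"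
    by (simp add: gam_def sum.distrib[symmetric] sum_distrib_left if_distrib) (intro sum.cong; simp)
  also have "(\<Sum>s<t. if 2 * s < n then Bq n k (n - 2 * s) else 0) = (\<Sum>s\<in>{s\<in>{..<t}. 2 * s < n}. Bq n k (n - 2 * s))"
    by (subst sum.inter_filter) auto
  also have "\<dots> \<le> (\<Sum>m\<le>n. Bq n k m)"
    by (rule reidx[where h = "\<lambda>s. n - 2 * s"]) (auto intro!: inj_onI simp: Bq_nonneg)
  also have "(\<Sum>s<t. if 2 * s < n then 0 else Bq n k (n - s)) = (\<Sum>s\<in>{s\<in>{..<t}. \<not> 2 * s < n}. Bq n k (n - s))"
    by (subst sum.inter_filter) (auto intro!: sum.cong)
  also have "\<dots> \<le> (\<Sum>m\<le>n. Bq n k m)"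
    using assms(3) by (intro reidx[where h = "\<lambda>s. n - s"]) (auto intro!: inj_onI simp: Bq_nonneg)
  finally have "(\<Sum>s<t. gam n k s) \<le> 4 * (\<Sum>m\<le>n. Bq n k m)" by simp
  also have "\<dots> = 12 * (real n + 1) / (real k + 1)" using sum_Bq[OF assms(1,2)] by simp
  also have "\<dots> \<le> 12 * real n / real k"
    using assms by (simp add: divide_simps) (simp add: algebra_simps)
  finally show ?thesis .
qed

lemma final:
  assumes k: "2 \<le> k" "k \<le> n" and t: "t \<le> n"
  shows "measure_pmf.expectation (drv n k t) (\<lambda>G. real (num_color n Red t G))
         + measure_pmf.expectation (drv n k t) (\<lambda>G. real (num_color n Green t G))
         \<le> 12 * real n / real k"
proof -
  note S = drv_supp[OF k, of t]
  let ?p = "drv n k t"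
  have "measure_pmf.expectation ?p (\<lambda>G. real (num_color n Red t G))
         + measure_pmf.expectation ?p (\<lambda>G. real (num_color n Green t G))
      = (\<Sum>G\<in>set_pmf ?p. pmf ?p G * real (cnt n G))"
    using S by (simp add: exp_sum sum.distrib[symmetric] distrib_left[symmetric] num_cnt)
  also have "\<dots> \<le> (\<Sum>G\<in>set_pmf ?p. pmf ?p G * (Phi n G - max (real n - 2 * real t) 0))"
  proof (rule sum_mono)
    fix G assume "G \<in> set_pmf ?p"
    then have "length G = t" using S by auto
    then have "real n \<le> real (card (Zs n G)) + 2 * real t" using card_Zs[of n G] by linarith
    then have "real (cnt n G) \<le> Phi n G - max (real n - 2 * real t) 0" by (simp add: Phi_def)
    then show "pmf ?p G * real (cnt n G) \<le> pmf ?p G * (Phi n G - max (real n - 2 * real t) 0)"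
      by (intro mult_left_mono) (auto simp: pmf_nonneg)
  qed
  also have "\<dots> = measure_pmf.expectation ?p (Phi n) - max (real n - 2 * real t) 0"
    using S sum_pmf_eq_1[of "set_pmf ?p" ?p]
    by (simp add: exp_sum right_diff_distrib sum_subtractf sum_distrib_right[symmetric])
  also have "\<dots> \<le> (\<Sum>s<t. gam n k s)" using main_inv[OF k, of t] by simp
  also have "\<dots> \<le> 12 * real n / real k" by (rule sum_gam[OF k t])
  finally show ?thesis .
qed


theorem lemma1:
  fixes k :: "nat \<Rightarrow> nat"
  assumes k_range: "\<forall>n\<ge>2. 2 \<le> k n \<and> k n \<le> n"
    and k_tendsto: "filterlim k at_top sequentially"
    and k_log: "\<forall>n\<ge>2. log 2 (real n) \<le> real (k n)"
  shows "\<exists>C::real. \<forall>n\<ge>2. \<forall>t\<le>n.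
           measure_pmf.expectation (drv n (k n) t) (\<lambda>G. real (num_color n Red t G))
         + measure_pmf.expectation (drv n (k n) t) (\<lambda>G. real (num_color n Green t G))
         \<le> C * real n / real (k n)"
proof (intro exI allI impI)
  fix n t :: nat assume n: "2 \<le> n" and t: "t \<le> n"
  have "2 \<le> k n" "k n \<le> n" using k_range n by auto
  then show "measure_pmf.expectation (drv n (k n) t) (\<lambda>G. real (num_color n Red t G))
         + measure_pmf.expectation (drv n (k n) t) (\<lambda>G. real (num_color n Green t G))
         \<le> 12 * real n / real (k n)"
    using final t by blast
qed

end
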